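(* For $\phi\in L^\infty$, the operator $V_\phi$ is hyponormal (i.e. $\|V_\phi^*f\|\le\|V_\phi f\|$ for all $f\in H^2$) if and only if $\phi=0$.
   Context: $L^2=L^2(\mathbb{T})$ with orthonormal basis $e_n(z)=z^n$, $n\in\mathbb{Z}$; $H^2$ is the closed span of $\{e_n\}_{n\ge0}$, $P:L^2\to H^2$ the orthogonal projection, $M_\phi$ multiplication by $\phi$. $W:L^2\to L^2$: $We_n=e_{n/2}$ for $n$ even, $0$ for $n$ odd. $K:H^2\to L^2$: $Ke_{2n}=e_n$, $Ke_{2n+1}=e_{-n-1}$ ($n\ge0$). The slant H-Toeplitz operator is $V_\phi=WPM_\phi K:H^2\to H^2$. *)

theory Defs
  imports "HOL-Analysis.Analysis"
begin

text \<open>L^2(T) is identified with l^2(Z) via the orthonormal basis e_n(z) = z^n,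
  i.e. an element of L^2 is represented by its coefficient sequence h :: int => complex.
  H^2 is identified with l^2(N) (coefficients of e_n, n >= 0).
  A symbol phi : T -> C is a function complex => complex evaluated on the unit circle
  via z = cis t, t in [0, 2 pi].\<close>

definition H2 :: "(nat \<Rightarrow> complex) set" where
  "H2 = {c. summable (\<lambda>n. (norm (c n))\<^sup>2)}"

definition H2_norm :: "(nat \<Rightarrow> complex) \<Rightarrow> real" where
  "H2_norm c = sqrt (\<Sum>n. (norm (c n))\<^sup>2)"

definition H2_inner :: "(nat \<Rightarrow> complex) \<Rightarrow> (nat \<Rightarrow> complex) \<Rightarrow> complex" where
  "H2_inner c d = (\<Sum>n. c n * cnj (d n))"

definition Linf :: "(complex \<Rightarrow> complex) \<Rightarrow> bool" where
  "Linf \<phi> \<longleftrightarrow> set_borel_measurable lborel {0..2*pi} (\<lambda>t. \<phi> (cis t)) \<and>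
     (\<exists>C. AE t in lborel. t \<in> {0..2*pi} \<longrightarrow> norm (\<phi> (cis t)) \<le> C)"

definition Linf_zero :: "(complex \<Rightarrow> complex) \<Rightarrow> bool" where
  "Linf_zero \<phi> \<longleftrightarrow> (AE t in lborel. t \<in> {0..2*pi} \<longrightarrow> \<phi> (cis t) = 0)"

definition fourier_coeff :: "(complex \<Rightarrow> complex) \<Rightarrow> int \<Rightarrow> complex" where
  "fourier_coeff \<phi> k =
     (LINT t:{0..2*pi}|lborel. \<phi> (cis t) * cis (- (of_int k * t))) / (2 * pi)"

text \<open>K : H^2 -> L^2,  K e_{2n} = e_n,  K e_{2n+1} = e_{-n-1}.\<close>
definition Kop :: "(nat \<Rightarrow> complex) \<Rightarrow> (int \<Rightarrow> complex)" where
  "Kop c = (\<lambda>m. if m \<ge> 0 then c (2 * nat m) else c (2 * nat (- m - 1) + 1))"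

text \<open>M_phi in the basis e_n: the Laurent matrix (a_{j-m}).\<close>
definition Mop :: "(complex \<Rightarrow> complex) \<Rightarrow> (int \<Rightarrow> complex) \<Rightarrow> (int \<Rightarrow> complex)" where
  "Mop \<phi> g = (\<lambda>j. \<Sum>\<^sub>\<infinity>m. fourier_coeff \<phi> (j - m) * g m)"

text \<open>P : L^2 -> H^2 orthogonal projection (kept inside L^2 here).\<close>
definition Pop :: "(int \<Rightarrow> complex) \<Rightarrow> (int \<Rightarrow> complex)" where
  "Pop h = (\<lambda>j. if j \<ge> 0 then h j else 0)"

text \<open>W : L^2 -> L^2, W e_n = e_{n/2} (n even), 0 (n odd); coefficient of e_k in W h is h_{2k}.\<close>
definition Wop :: "(int \<Rightarrow> complex) \<Rightarrow> (int \<Rightarrow> complex)" where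
  "Wop h = (\<lambda>k. h (2 * k))"

definition Vop :: "(complex \<Rightarrow> complex) \<Rightarrow> (nat \<Rightarrow> complex) \<Rightarrow> (nat \<Rightarrow> complex)" where
  "Vop \<phi> c = (\<lambda>n. Wop (Pop (Mop \<phi> (Kop c))) (int n))"

definition is_adjoint_H2 ::
  "((nat \<Rightarrow> complex) \<Rightarrow> (nat \<Rightarrow> complex)) \<Rightarrow> ((nat \<Rightarrow> complex) \<Rightarrow> (nat \<Rightarrow> complex)) \<Rightarrow> bool" where
  "is_adjoint_H2 A T \<longleftrightarrow> (\<forall>g\<in>H2. T g \<in> H2) \<and>
     (\<forall>f\<in>H2. \<forall>g\<in>H2. H2_inner (A f) g = H2_inner f (T g))"

definition hyponormal_H2 :: "((nat \<Rightarrow> complex) \<Rightarrow> (nat \<Rightarrow> complex)) \<Rightarrow> bool" where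
  "hyponormal_H2 A \<longleftrightarrow> (\<exists>T. is_adjoint_H2 A T \<and> (\<forall>f\<in>H2. H2_norm (T f) \<le> H2_norm (A f)))"

end

theory Submission
  imports Defs
begin

lemma Linf_integrable:
  assumes "Linf \<phi>"
  shows "set_integrable lborel {0..2*pi} (\<lambda>t. \<phi> (cis t))"
proof -
  from assms obtain C where meas: "set_borel_measurable lborel {0..2*pi} (\<lambda>t. \<phi> (cis t))"
    and bd: "AE t in lborel. t \<in> {0..2*pi} \<longrightarrow> norm (\<phi> (cis t)) \<le> C"
    unfolding Linf_def by blast
  have i1: "integrable lborel (\<lambda>x. indicator {0..2*pi} x *\<^sub>R C)"
    by (intro integrable_scaleR_left integrable_real_indicator) (auto simp: emeasure_lborel_Icc)
  show ?thesis unfolding set_integrable_def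
  proof (rule Bochner_Integration.integrable_bound[OF i1])
    show "(\<lambda>x. indicator {0..2*pi} x *\<^sub>R \<phi> (cis x)) \<in> borel_measurable lborel"
      using meas unfolding set_borel_measurable_def .
    show "AE x in lborel. norm (indicator {0..2*pi} x *\<^sub>R \<phi> (cis x)) \<le> norm (indicator {0..2*pi} x *\<^sub>R C)"
      using bd by eventually_elim (auto simp: indicator_def)
  qed
qed

lemma mult_bounded:
  fixes f h :: "real \<Rightarrow> complex"
  assumes f: "set_integrable lborel S f" and hm: "h \<in> borel_measurable lborel"
    and hb: "\<And>t. t \<in> S \<Longrightarrow> norm (h t) \<le> B"
  shows "set_integrable lborel S (\<lambda>t. f t * h t)"
proof -
  have fi: "integrable lborel (\<lambda>t. indicator S t *\<^sub>R f t)" using f unfolding set_integrable_def .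
  have i1: "integrable lborel (\<lambda>t. B *\<^sub>R (indicator S t *\<^sub>R f t))"
    using fi by (rule integrable_scaleR_right)
  show ?thesis unfolding set_integrable_def
  proof (rule Bochner_Integration.integrable_bound[OF i1])
    have "(\<lambda>t. (indicator S t *\<^sub>R f t) * h t) \<in> borel_measurable lborel"
      using borel_measurable_integrable[OF fi] hm by measurable
    then show "(\<lambda>t. indicator S t *\<^sub>R (f t * h t)) \<in> borel_measurable lborel"
      by simp
    show "AE x in lborel. norm (indicator S x *\<^sub>R (f x * h x)) \<le> norm (B *\<^sub>R (indicator S x *\<^sub>R f x))"
    proof (rule AE_I2)
      fix x
      show "norm (indicator S x *\<^sub>R (f x * h x)) \<le> norm (B *\<^sub>R (indicator S x *\<^sub>R f x))"
      proof (cases "x \<in> S")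
        case True
        then have "norm (h x) \<le> B" by (rule hb)
        then have "norm (f x) * norm (h x) \<le> norm (f x) * \<bar>B\<bar>"
          by (intro mult_left_mono) auto
        then show ?thesis using True by (simp add: norm_mult mult.commute)
      qed simp
    qed
  qed
qed

inductive trig :: "(real \<Rightarrow> complex) \<Rightarrow> bool" where
  trig_base: "trig (\<lambda>t. c * cis (of_int k * t))"
| trig_add: "trig P \<Longrightarrow> trig Q \<Longrightarrow> trig (\<lambda>t. P t + Q t)"

lemma trig_const: "trig (\<lambda>t. c)"
  using trig_base[of c 0] by simp

lemma trig_mult: "trig P \<Longrightarrow> trig Q \<Longrightarrow> trig (\<lambda>t. P t * Q t)"
proof (induction P rule: trig.induct)
  case (trig_base c k)
  from trig_base.prems show ?case
  proof (induction Q rule: trig.induct)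
    case (trig_base d l)
    have "(\<lambda>t. c * cis (of_int k * t) * (d * cis (of_int l * t))) = (\<lambda>t. (c * d) * cis (of_int (k + l) * t))"
      by (rule ext) (simp add: cis_mult[symmetric] algebra_simps)
    then show ?case using trig.trig_base by metis
  next
    case (trig_add P Q)
    then show ?case using trig.trig_add[OF trig_add.IH] by (simp add: distrib_left)
  qed
next
  case (trig_add P1 P2)
  then show ?case using trig.trig_add[OF trig_add.IH] by (simp add: distrib_right)
qed

lemma trig_cont: "trig P \<Longrightarrow> continuous_on UNIV P"
  by (induction P rule: trig.induct) (auto intro!: continuous_intros)

lemma trig_meas: "trig P \<Longrightarrow> P \<in> borel_measurable lborel"
  using trig_cont borel_measurable_continuous_onI by auto

lemma trig_bounded: "trig P \<Longrightarrow> \<exists>B. \<forall>t. norm (P t) \<le> B"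
proof (induction P rule: trig.induct)
  case (trig_base c k)
  then show ?case by (auto simp: norm_mult)
next
  case (trig_add P Q)
  then obtain B1 B2 where "\<forall>t. norm (P t) \<le> B1" "\<forall>t. norm (Q t) \<le> B2" by blast
  then have "\<forall>t. norm (P t + Q t) \<le> B1 + B2" by (metis norm_triangle_le add_mono)
  then show ?case by blast
qed

lemma trig_int0:
  assumes L: "Linf \<phi>" and z: "\<And>k. fourier_coeff \<phi> k = 0" and P: "trig P"
  shows "set_integrable lborel {0..2*pi} (\<lambda>t. \<phi> (cis t) * P t)
      \<and> (LINT t:{0..2*pi}|lborel. \<phi> (cis t) * P t) = 0"
proof
  obtain B where "\<forall>t. norm (P t) \<le> B" using trig_bounded[OF P] by blast
  then show "set_integrable lborel {0..2*pi} (\<lambda>t. \<phi> (cis t) * P t)"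
    using mult_bounded[OF Linf_integrable[OF L] trig_meas[OF P]] by blast
next
  show "(LINT t:{0..2*pi}|lborel. \<phi> (cis t) * P t) = 0"
    using P
  proof (induction P rule: trig.induct)
    case (trig_base c k)
    have "fourier_coeff \<phi> (- k) = 0" by (rule z)
    then have "(LINT t:{0..2*pi}|lborel. \<phi> (cis t) * cis (- (of_int (- k) * t))) = 0"
      unfolding fourier_coeff_def by simp
    then have "(LINT t:{0..2*pi}|lborel. \<phi> (cis t) * cis (of_int k * t)) = 0" by simp
    then have "c * (LINT t:{0..2*pi}|lborel. \<phi> (cis t) * cis (of_int k * t)) = 0" by simp
    then show ?case by (simp add: mult.left_commute)
  next
    case (trig_add P Q)
    obtain B1 where "\<forall>t. norm (P t) \<le> B1" using trig_bounded[OF trig_add.hyps(1)] by blast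
    then have iP: "set_integrable lborel {0..2*pi} (\<lambda>t. \<phi> (cis t) * P t)"
      using mult_bounded[OF Linf_integrable[OF L] trig_meas[OF trig_add.hyps(1)]] by blast
    obtain B2 where "\<forall>t. norm (Q t) \<le> B2" using trig_bounded[OF trig_add.hyps(2)] by blast
    then have iQ: "set_integrable lborel {0..2*pi} (\<lambda>t. \<phi> (cis t) * Q t)"
      using mult_bounded[OF Linf_integrable[OF L] trig_meas[OF trig_add.hyps(2)]] by blast
    have "(LINT t:{0..2*pi}|lborel. \<phi> (cis t) * (P t + Q t)) =
      (LINT t:{0..2*pi}|lborel. \<phi> (cis t) * P t + \<phi> (cis t) * Q t)"
      by (simp add: distrib_left)
    also have "\<dots> = 0" using set_integral_add(2)[OF iP iQ] trig_add.IH by simp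
    finally show ?case .
  qed
qed

lemma trig_cos: "trig (\<lambda>t. complex_of_real (cos t))"
proof -
  have "trig (\<lambda>t. (1/2) * cis (of_int 1 * t) + (1/2) * cis (of_int (-1) * t))"
    by (intro trig_add trig_base)
  moreover have "(\<lambda>t. (1/2) * cis (of_int 1 * t) + (1/2) * cis (of_int (-1) * t)) = (\<lambda>t. complex_of_real (cos t))"
    by (rule ext) (simp add: complex_eq_iff cis.sel)
  ultimately show ?thesis by simp
qed

lemma trig_sin: "trig (\<lambda>t. complex_of_real (sin t))"
proof -
  have "trig (\<lambda>t. (- \<i>/2) * cis (of_int 1 * t) + (\<i>/2) * cis (of_int (-1) * t))"
    by (intro trig_add trig_base)
  moreover have "(\<lambda>t. (- \<i>/2) * cis (of_int 1 * t) + (\<i>/2) * cis (of_int (-1) * t)) = (\<lambda>t. complex_of_real (sin t))"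
    by (rule ext) (simp add: complex_eq_iff cis.sel)
  ultimately show ?thesis by simp
qed

lemma rpf_trig: "real_polynomial_function G \<Longrightarrow> trig (\<lambda>t. complex_of_real (G (cis t)))"
proof (induction G rule: real_polynomial_function.induct)
  case (linear G)
  have eq: "G z = Re z * G 1 + Im z * G \<i>" for z
  proof -
    have "z = Re z *\<^sub>R 1 + Im z *\<^sub>R \<i>" by (simp add: complex_eq_iff)
    then have "G z = G (Re z *\<^sub>R 1 + Im z *\<^sub>R \<i>)" by simp
    also have "\<dots> = Re z *\<^sub>R G 1 + Im z *\<^sub>R G \<i>"
      using linear.hyps by (simp add: linear_simps)
    finally show ?thesis by simp
  qed
  have "trig (\<lambda>t. complex_of_real (G 1) * complex_of_real (cos t) + complex_of_real (G \<i>) * complex_of_real (sin t))"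
    by (intro trig_add trig_mult trig_const trig_cos trig_sin)
  moreover have "complex_of_real (G (cis t)) = complex_of_real (G 1) * complex_of_real (cos t) + complex_of_real (G \<i>) * complex_of_real (sin t)" for t
    by (subst eq[of "cis t"]) (simp add: mult.commute)
  ultimately show ?case by simp
next
  case (const c)
  then show ?case using trig_const by simp
next
  case (add f g)
  then show ?case using trig_add by fastforce
next
  case (mult f g)
  then show ?case using trig_mult by fastforce
qed

lemma le_eps_mult:
  fixes x M :: real
  assumes "M \<ge> 0" "\<And>e. e > 0 \<Longrightarrow> x \<le> e * M"
  shows "x \<le> 0"
proof (rule ccontr)
  assume "\<not> x \<le> 0"
  then have x: "x > 0" by simp
  define e where "e = x / (M + 1)"
  have e: "e > 0" using x assms(1) by (simp add: e_def)
  have "e * M < e * (M + 1)" using e by simp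
  also have "\<dots> = x" using assms(1) by (simp add: e_def)
  finally show False using assms(2)[OF e] by simp
qed

lemma cis_sphere [simp]: "cis t \<in> sphere 0 1"
  by simp

lemma cont_int0:
  fixes G :: "complex \<Rightarrow> real"
  assumes L: "Linf \<phi>" and z: "\<And>k. fourier_coeff \<phi> k = 0"
    and G: "continuous_on (sphere 0 1) G"
  shows "set_integrable lborel {0..2*pi} (\<lambda>t. \<phi> (cis t) * complex_of_real (G (cis t)))"
    and "(LINT t:{0..2*pi}|lborel. \<phi> (cis t) * complex_of_real (G (cis t))) = 0"
proof -
  define S where "S = {0..2*pi}"
  define f where "f = (\<lambda>t. \<phi> (cis t))"
  have fi: "set_integrable lborel S f" using Linf_integrable[OF L] by (simp add: S_def f_def)
  have Gc: "continuous_on UNIV (\<lambda>t. G (cis t))"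
    by (rule continuous_on_compose2[OF G]) (auto intro!: continuous_intros)
  have Gcm: "(\<lambda>t. complex_of_real (G (cis t))) \<in> borel_measurable lborel"
  proof -
    have c: "continuous_on UNIV (\<lambda>t. complex_of_real (G (cis t)))"
      by (rule continuous_on_of_real[OF Gc])
    show ?thesis using borel_measurable_continuous_onI[OF c] by simp
  qed
  have "bounded (G ` sphere 0 1)"
    by (rule compact_imp_bounded, rule compact_continuous_image[OF G compact_sphere])
  then obtain B where B: "\<And>z. z \<in> sphere 0 1 \<Longrightarrow> norm (G z) \<le> B"
    unfolding bounded_iff by blast
  have iG: "set_integrable lborel S (\<lambda>t. f t * complex_of_real (G (cis t)))"
    by (rule mult_bounded[OF fi Gcm, of B]) (use B in auto)
  then show "set_integrable lborel {0..2*pi} (\<lambda>t. \<phi> (cis t) * complex_of_real (G (cis t)))"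
    by (simp add: S_def f_def)
  define I where "I = (LINT t:S|lborel. f t * complex_of_real (G (cis t)))"
  define M where "M = (LINT t:S|lborel. norm (f t))"
  have M0: "M \<ge> 0" unfolding M_def set_lebesgue_integral_def
    by (rule integral_nonneg_AE) auto
  have "norm I \<le> 0"
  proof (rule le_eps_mult[OF M0])
    fix e :: real assume e: "e > 0"
    obtain Q where Q: "real_polynomial_function Q" and QG: "\<And>z. z \<in> sphere 0 1 \<Longrightarrow> \<bar>G z - Q z\<bar> < e"
      using Stone_Weierstrass_real_polynomial_function[OF compact_sphere G e] by blast
    have tQ: "trig (\<lambda>t. complex_of_real (Q (cis t)))" by (rule rpf_trig[OF Q])
    from trig_int0[OF L z tQ]
    have iQ: "set_integrable lborel S (\<lambda>t. f t * complex_of_real (Q (cis t)))"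
      and IQ: "(LINT t:S|lborel. f t * complex_of_real (Q (cis t))) = 0"
      by (simp_all add: S_def f_def)
    have iD: "set_integrable lborel S (\<lambda>t. f t * complex_of_real (G (cis t)) - f t * complex_of_real (Q (cis t)))"
      by (rule set_integral_diff(1)[OF iG iQ])
    have "I = (LINT t:S|lborel. f t * complex_of_real (G (cis t)) - f t * complex_of_real (Q (cis t)))"
      unfolding I_def using set_integral_diff(2)[OF iG iQ] IQ by simp
    then have "norm I \<le> (LINT t:S|lborel. norm (f t * complex_of_real (G (cis t)) - f t * complex_of_real (Q (cis t))))"
      using set_integral_norm_bound[OF iD] by simp
    also have "\<dots> \<le> (LINT t:S|lborel. e * norm (f t))"
    proof (rule set_integral_mono)
      show "set_integrable lborel S (\<lambda>t. norm (f t * complex_of_real (G (cis t)) - f t * complex_of_real (Q (cis t))))"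
        using set_integrable_norm[OF iD] .
      show "set_integrable lborel S (\<lambda>t. e * norm (f t))"
        using set_integrable_norm[OF fi] by (rule set_integrable_mult_right)
      fix t assume "t \<in> S"
      have "norm (f t * complex_of_real (G (cis t)) - f t * complex_of_real (Q (cis t)))
          = norm (f t) * \<bar>G (cis t) - Q (cis t)\<bar>"
        by (simp add: right_diff_distrib[symmetric] norm_mult del: of_real_diff add: of_real_diff[symmetric])
      also have "\<dots> \<le> norm (f t) * e"
        using QG[of "cis t"] by (intro mult_left_mono) auto
      finally show "norm (f t * complex_of_real (G (cis t)) - f t * complex_of_real (Q (cis t))) \<le> e * norm (f t)"
        by (simp add: mult.commute)
    qed
    also have "\<dots> = e * M" unfolding M_def by simp
    finally show "norm I \<le> e * M" .
  qed
  then show "(LINT t:{0..2*pi}|lborel. \<phi> (cis t) * complex_of_real (G (cis t))) = 0"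
    by (simp add: I_def S_def f_def)
qed

lemma cis_inj_aux:
  assumes t: "0 \<le> t" "t \<le> 2*pi" and s: "0 < s" "s < 2*pi" and eq: "cis t = cis s"
  shows "t = s"
proof -
  have "cis (t - s) = 1" using eq by (simp add: cis_divide[symmetric])
  then have "cos (t - s) = 1" by (metis cis.sel(1) one_complex.sel(1))
  then obtain n :: int where n: "t - s = of_int n * 2 * pi" using cos_one_2pi_int by blast
  have "of_int n * 2 * pi < 1 * 2 * pi" using n t s by linarith
  then have "of_int n < (1::real)" by simp
  then have n1: "n < 1" by linarith
  have "of_int (-1) * 2 * pi < of_int n * 2 * pi" using n t s by linarith
  then have "pi * (-1) < pi * of_int n" by (simp add: algebra_simps)
  then have "(-1::real) < of_int n" using mult_less_cancel_left_pos[OF pi_gt_zero] by blast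
  then have n2: "-1 < n" by linarith
  from n1 n2 have "n = 0" by simp
  then show ?thesis using n by simp
qed

lemma interval_int0:
  assumes L: "Linf \<phi>" and z: "\<And>k. fourier_coeff \<phi> k = 0"
    and ab: "0 < \<alpha>" "\<alpha> \<le> \<beta>" "\<beta> < 2*pi"
  shows "(LINT t:{\<alpha>..\<beta>}|lborel. \<phi> (cis t)) = 0"
proof -
  define S where "S = {0..2*pi}"
  define f where "f = (\<lambda>t. \<phi> (cis t))"
  define K where "K = cis ` {\<alpha>..\<beta>}"
  have fi: "set_integrable lborel S f" using Linf_integrable[OF L] by (simp add: S_def f_def)
  have Kc: "compact K" unfolding K_def
    by (rule compact_continuous_image) (auto intro!: continuous_intros)
  then have Kcl: "closed K" by (rule compact_imp_closed)
  have Kne: "K \<noteq> {}" using ab by (simp add: K_def)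
  have indeq: "indicator S t * indicator K (cis t) = (indicator {\<alpha>..\<beta>} t :: real)" for t
  proof -
    have "(t \<in> S \<and> cis t \<in> K) \<longleftrightarrow> t \<in> {\<alpha>..\<beta>}"
    proof
      assume "t \<in> S \<and> cis t \<in> K"
      then obtain s where s: "s \<in> {\<alpha>..\<beta>}" "cis t = cis s" and t: "t \<in> S" by (auto simp: K_def)
      have "t = s" by (rule cis_inj_aux) (use s t ab in \<open>auto simp: S_def\<close>)
      then show "t \<in> {\<alpha>..\<beta>}" using s by simp
    next
      assume "t \<in> {\<alpha>..\<beta>}"
      then show "t \<in> S \<and> cis t \<in> K" using ab by (auto simp: S_def K_def)
    qed
    then show ?thesis by (auto simp: indicator_def)
  qed
  define G where "G n z = max 0 (1 - real n * infdist z K)" for n z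
  have Gc: "continuous_on (sphere 0 1) (G n)" for n
    unfolding G_def by (intro continuous_intros)
  have G01: "0 \<le> G n z \<and> G n z \<le> 1" for n z
    unfolding G_def using infdist_nonneg[of z K] by (auto simp: max_def)
  define s where "s n t = indicator S t *\<^sub>R (f t * complex_of_real (G n (cis t)))" for n t
  define F where "F = (\<lambda>t. indicator {\<alpha>..\<beta>} t *\<^sub>R f t)"
  define w where "w = (\<lambda>t. norm (indicator S t *\<^sub>R f t))"
  have si: "integrable lborel (s n)" for n
    using cont_int0(1)[OF L z Gc[of n]] unfolding s_def S_def f_def set_integrable_def .
  have s0: "integral\<^sup>L lborel (s n) = 0" for n
    using cont_int0(2)[OF L z Gc[of n]] unfolding s_def S_def f_def set_lebesgue_integral_def .
  have Fi: "set_integrable lborel {\<alpha>..\<beta>} f"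
    by (rule set_integrable_subset[OF fi]) (use ab in \<open>auto simp: S_def\<close>)
  have lim: "(\<lambda>n. integral\<^sup>L lborel (s n)) \<longlonglongrightarrow> integral\<^sup>L lborel F"
  proof (rule integral_dominated_convergence[where w = w])
    show "F \<in> borel_measurable lborel"
      using borel_measurable_integrable[OF Fi[unfolded set_integrable_def]] by (simp add: F_def)
    show "s n \<in> borel_measurable lborel" for n using borel_measurable_integrable[OF si] .
    show "integrable lborel w" unfolding w_def using fi[unfolded set_integrable_def] by (rule integrable_norm)
    show "AE x in lborel. norm (s n x) \<le> w x" for n
    proof (rule AE_I2)
      fix x
      have "norm (s n x) = norm (indicator S x *\<^sub>R f x) * \<bar>G n (cis x)\<bar>"
        by (simp add: s_def norm_mult)
      also have "\<dots> \<le> norm (indicator S x *\<^sub>R f x) * 1"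
        using G01[of n "cis x"] by (intro mult_left_mono) auto
      finally show "norm (s n x) \<le> w x" by (simp add: w_def)
    qed
    show "AE x in lborel. (\<lambda>n. s n x) \<longlonglongrightarrow> F x"
    proof (rule AE_I2)
      fix x
      show "(\<lambda>n. s n x) \<longlonglongrightarrow> F x"
      proof (cases "cis x \<in> K")
        case True
        then have "infdist (cis x) K = 0" by simp
        then have "s n x = F x" for n
          using indeq[of x] True by (simp add: s_def F_def G_def indicator_def split: if_splits)
        then show ?thesis by simp
      next
        case False
        then have d: "infdist (cis x) K > 0"
          using in_closed_iff_infdist_zero[OF Kcl Kne] infdist_nonneg[of "cis x" K] by auto
        obtain N :: nat where N: "N > 1 / infdist (cis x) K" using reals_Archimedean2 by blast
        have "s n x = F x" if "n \<ge> N" for n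
        proof -
          have "real n \<ge> real N" using that by simp
          then have "real n * infdist (cis x) K \<ge> real N * infdist (cis x) K"
            using d by (intro mult_right_mono) auto
          moreover have "real N * infdist (cis x) K > 1"
            using N d by (simp add: field_simps)
          ultimately have "G n (cis x) = 0" by (simp add: G_def)
          then show ?thesis using indeq[of x] False by (simp add: s_def F_def indicator_def split: if_splits)
        qed
        then have "eventually (\<lambda>n. s n x = F x) sequentially"
          using eventually_sequentially by blast
        then show ?thesis by (rule tendsto_eventually)
      qed
    qed
  qed
  then have "integral\<^sup>L lborel F = 0" using s0 by (simp add: LIMSEQ_const_iff)
  then show ?thesis by (simp add: F_def f_def set_lebesgue_integral_def)
qed

lemma uniqueness:
  assumes L: "Linf \<phi>" and z: "\<And>k. fourier_coeff \<phi> k = 0"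
  shows "Linf_zero \<phi>"
proof -
  define S where "S = {0..2*pi}"
  define f where "f = (\<lambda>t. \<phi> (cis t))"
  define g where "g = (\<lambda>t. indicator S t *\<^sub>R f t)"
  have fi: "set_integrable lborel S f" using Linf_integrable[OF L] by (simp add: S_def f_def)
  have gU: "g integrable_on UNIV"
    using integrable_on_lborel fi unfolding set_integrable_def g_def by blast
  have gab: "g integrable_on cbox a b" for a b :: real
    by (rule integrable_on_subcbox[OF gU]) simp
  obtain N where N: "negligible N"
    and Nd: "\<And>x e. \<lbrakk>x \<notin> N; 0 < e\<rbrakk> \<Longrightarrow>
               \<exists>d>0. \<forall>h. 0 < h \<and> h < d \<longrightarrow>
                         norm(integral (cbox x (x + h *\<^sub>R One)) g /\<^sub>R h ^ DIM(real) - g x) < e"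
    using integrable_ccontinuous_explicit[of g] gab by blast
  have fz: "f x = 0" if x: "0 < x" "x < 2*pi" "x \<notin> N" for x
  proof -
    have "norm (f x) < e" if e: "e > 0" for e
    proof -
      obtain d where d: "d > 0" and hd: "\<And>h. 0 < h \<and> h < d \<Longrightarrow>
          norm(integral (cbox x (x + h *\<^sub>R One)) g /\<^sub>R h ^ DIM(real) - g x) < e"
        using Nd[OF x(3) e] by blast
      define h where "h = min (d/2) ((2*pi - x)/2)"
      have h: "0 < h" "h < d" "x + h < 2*pi" using d x by (auto simp: h_def min_def field_simps)
      have sub: "{x..x+h} \<subseteq> S" using x h by (auto simp: S_def)
      have "integral {x..x+h} g = integral {x..x+h} f"
        by (rule integral_cong) (use sub in \<open>auto simp: g_def\<close>)
      also have "\<dots> = (LINT t:{x..x+h}|lborel. f t)"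
        by (rule set_borel_integral_eq_integral(2)[symmetric], rule set_integrable_subset[OF fi _ sub]) auto
      also have "\<dots> = 0"
        unfolding f_def by (rule interval_int0[OF L z]) (use x h in auto)
      finally have "integral {x..x+h} g = 0" .
      moreover have "g x = f x" using x by (simp add: g_def S_def)
      ultimately show ?thesis using hd[of h] h by simp
    qed
    then show ?thesis
      by (metis norm_le_zero_iff order_less_irrefl not_le)
  qed
  have "AE t in lebesgue. t \<in> S \<longrightarrow> f t = 0"
    unfolding eventually_ae_filter_negligible
  proof (intro exI conjI)
    show "negligible (N \<union> {0, 2*pi})" using N by simp
    show "{t. \<not> (t \<in> S \<longrightarrow> f t = 0)} \<subseteq> N \<union> {0, 2*pi}"
      using fz by (force simp: S_def)
  qed
  then show ?thesis unfolding Linf_zero_def AE_completion_iff by (simp add: S_def f_def)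
qed


definition iota :: "nat \<Rightarrow> int" where
  "iota i = (if even i then int (i div 2) else - int (i div 2) - 1)"

lemma iota_bij: "bij iota"
proof (rule bij_betw_byWitness[where f' = "\<lambda>z. if z \<ge> 0 then 2 * nat z else 2 * nat (- z - 1) + 1"])
  show "\<forall>a\<in>UNIV. (if iota a \<ge> 0 then 2 * nat (iota a) else 2 * nat (- iota a - 1) + 1) = a"
    by (auto simp: iota_def)
  show "\<forall>a'\<in>UNIV. iota (if a' \<ge> 0 then 2 * nat a' else 2 * nat (- a' - 1) + 1) = a'"
    by (auto simp: iota_def)
qed auto

lemma Kop_e: "Kop (\<lambda>n. if n = i then 1 else 0) = (\<lambda>m. if m = iota i then 1 else 0)"
proof (rule ext)
  fix m :: int
  show "Kop (\<lambda>n. if n = i then 1 else 0) m = (if m = iota i then 1 else 0)"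
  proof (cases "m \<ge> 0")
    case True
    then have "(2 * nat m = i) = (m = iota i)" unfolding iota_def by auto
    then show ?thesis using True by (simp add: Kop_def)
  next
    case False
    then have "(2 * nat (- m - 1) + 1 = i) = (m = iota i)" unfolding iota_def by auto
    then show ?thesis using False by (simp add: Kop_def)
  qed
qed

lemma Vop_e: "Vop \<phi> (\<lambda>n. if n = i then 1 else 0) k = fourier_coeff \<phi> (2 * int k - iota i)"
proof -
  have "Vop \<phi> (\<lambda>n. if n = i then 1 else 0) k =
     (\<Sum>\<^sub>\<infinity>m. fourier_coeff \<phi> (2 * int k - m) * (if m = iota i then 1 else 0))"
    by (simp add: Vop_def Wop_def Pop_def Mop_def Kop_e)
  also have "\<dots> = (\<Sum>\<^sub>\<infinity>m\<in>{iota i}. fourier_coeff \<phi> (2 * int k - m) * (if m = iota i then 1 else 0))"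
    by (rule infsum_cong_neutral) auto
  finally show ?thesis by simp
qed

lemma suminf_single': "(\<Sum>n. if n = k then (f n::'a::{t2_space,comm_monoid_add,topological_space}) else 0) = f k"
  by (rule sums_unique[symmetric]) (rule sums_single)

lemma key_sum:
  fixes g :: "int \<Rightarrow> real"
  assumes nn: "\<And>j. g j \<ge> 0"
    and sm: "summable (\<lambda>i. g (c - iota i))"
    and le: "(\<Sum>i. g (c - iota i)) \<le> (\<Sum>n. g (2 * int n + int p + 1))"
    and j: "j \<le> int p"
  shows "g j = 0"
proof -
  define h where "h = (\<lambda>i. c - iota i)"
  have bh: "bij h"
  proof -
    have "bij (\<lambda>z::int. c - z)"
      by (rule bij_betw_byWitness[where f'="\<lambda>z. c - z"]) auto
    then show ?thesis unfolding h_def using bij_comp[OF iota_bij, of "\<lambda>z. c - z"]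
      by (simp add: o_def)
  qed
  have s1: "(g \<circ> h) summable_on UNIV"
    using summable_nonneg_imp_summable_on[OF sm] nn by (simp add: h_def o_def)
  have gs: "g summable_on UNIV"
    using summable_on_reindex_bij_betw[OF bh] s1 by (simp add: o_def) blast
  have eq1: "(\<Sum>i. g (c - iota i)) = infsum g UNIV"
  proof -
    have "((g \<circ> h) has_sum (\<Sum>i. g (c - iota i))) UNIV"
      using sums_nonneg_imp_has_sum[OF summable_sums[OF sm]] nn by (simp add: h_def o_def)
    then have "(g has_sum (\<Sum>i. g (c - iota i))) UNIV"
      using has_sum_reindex_bij_betw[OF bh] by (simp add: o_def) blast
    then show ?thesis by (simp add: infsumI)
  qed
  define b where "b = (\<lambda>n::nat. 2 * int n + int p + 1)"
  define B where "B = range b"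
  have ib: "inj b" unfolding b_def by (rule injI) simp
  have gB: "g summable_on B" using summable_on_subset[OF gs] by simp
  have gnB: "g summable_on (- B)" using summable_on_subset[OF gs] by simp
  have "(g \<circ> b) summable_on UNIV"
    using summable_on_reindex[OF ib] gB B_def by blast
  then have smb: "summable (\<lambda>n. g (b n))" using summable_on_imp_summable by (simp add: o_def)
  have eq2: "(\<Sum>n. g (2 * int n + int p + 1)) = infsum g B"
  proof -
    have "((g \<circ> b) has_sum (\<Sum>n. g (b n))) UNIV"
      using sums_nonneg_imp_has_sum[OF summable_sums[OF smb]] nn by (simp add: o_def)
    then have "(g has_sum (\<Sum>n. g (b n))) B"
      using has_sum_reindex[OF ib] B_def by blast
    then show ?thesis by (simp add: infsumI b_def)
  qed
  have jB: "j \<in> - B" using j unfolding B_def b_def by auto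
  have "infsum g UNIV = infsum g B + infsum g (- B)"
    using infsum_Un_disjoint[OF gB gnB] by (simp add: Un_commute)
  moreover have "g j \<le> infsum g (- B)"
  proof -
    have "infsum g {j} \<le> infsum g (- B)"
      by (rule infsum_mono_neutral) (use gnB jB nn in auto)
    then show ?thesis by simp
  qed
  ultimately have "g j \<le> 0" using le eq1 eq2 by linarith
  then show ?thesis using nn[of j] by linarith
qed

lemma coeffs_zero:
  assumes "hyponormal_H2 (Vop \<phi>)"
  shows "fourier_coeff \<phi> j = 0"
proof -
  obtain T where adj: "is_adjoint_H2 (Vop \<phi>) T" and hyp: "\<forall>f\<in>H2. H2_norm (T f) \<le> H2_norm (Vop \<phi> f)"
    using assms unfolding hyponormal_H2_def by blast
  define e where "e i = (\<lambda>n::nat. if n = i then (1::complex) else 0)" for i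
  have eH: "e i \<in> H2" for i
  proof -
    have "(\<lambda>n. (norm (e i n))\<^sup>2) = (\<lambda>n. if n = i then 1 else 0)"
      by (auto simp: e_def)
    then show ?thesis unfolding H2_def using sums_single[of i "\<lambda>_. 1::real"]
      by (auto simp: sums_iff)
  qed
  define a where "a = fourier_coeff \<phi>"
  have Ve: "Vop \<phi> (e i) k = a (2 * int k - iota i)" for i k
    unfolding e_def a_def by (rule Vop_e)
  have Te: "T (e k) i = cnj (a (2 * int k - iota i))" for i k
  proof -
    have "H2_inner (Vop \<phi> (e i)) (e k) = H2_inner (e i) (T (e k))"
      using adj eH unfolding is_adjoint_H2_def by blast
    moreover have "H2_inner (Vop \<phi> (e i)) (e k) = Vop \<phi> (e i) k"
    proof -
      have "(\<lambda>n. Vop \<phi> (e i) n * cnj (e k n)) = (\<lambda>n. if n = k then Vop \<phi> (e i) n else 0)"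
        by (auto simp: e_def)
      then show ?thesis unfolding H2_inner_def using suminf_single' by metis
    qed
    moreover have "H2_inner (e i) (T (e k)) = cnj (T (e k) i)"
    proof -
      have "(\<lambda>n. e i n * cnj (T (e k) n)) = (\<lambda>n. if n = i then cnj (T (e k) n) else 0)"
        by (auto simp: e_def)
      then show ?thesis unfolding H2_inner_def using suminf_single' by metis
    qed
    ultimately show ?thesis using Ve by (metis complex_cnj_cnj)
  qed
  define g where "g j = (cmod (a j))\<^sup>2" for j
  define p where "p = nat j"
  define k where "k = 2 * p + 1"
  have ik: "iota k = - int p - 1" unfolding k_def iota_def by simp
  have TH: "T (e k) \<in> H2" using adj eH unfolding is_adjoint_H2_def by blast
  have sm: "summable (\<lambda>i. g (2 * int k - iota i))"
    using TH unfolding H2_def g_def by (simp add: Te)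
  have "H2_norm (T (e k)) \<le> H2_norm (Vop \<phi> (e k))" using hyp eH by blast
  then have "sqrt (\<Sum>i. g (2 * int k - iota i)) \<le> sqrt (\<Sum>n. g (2 * int n + int p + 1))"
    unfolding H2_norm_def g_def by (simp add: Te Ve ik algebra_simps)
  then have le: "(\<Sum>i. g (2 * int k - iota i)) \<le> (\<Sum>n. g (2 * int n + int p + 1))"
    by simp
  have "g j = 0"
    by (rule key_sum[OF _ sm le]) (auto simp: g_def p_def)
  then show ?thesis by (simp add: g_def a_def)
qed

lemma zero_coeffs_from_ae:
  assumes "Linf_zero \<phi>"
  shows "fourier_coeff \<phi> k = 0"
proof -
  have "AE t in lborel. indicator {0..2*pi} t *\<^sub>R (\<phi> (cis t) * cis (- (of_int k * t))) = 0"
    using assms unfolding Linf_zero_def by eventually_elim (auto simp: indicator_def)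
  then have "(LINT t:{0..2*pi}|lborel. \<phi> (cis t) * cis (- (of_int k * t))) = 0"
    unfolding set_lebesgue_integral_def by (rule integral_eq_zero_AE)
  then show ?thesis unfolding fourier_coeff_def by simp
qed

theorem mainTheorem8:
  fixes \<phi> :: "complex \<Rightarrow> complex"
  assumes "Linf \<phi>"
  shows "hyponormal_H2 (Vop \<phi>) \<longleftrightarrow> Linf_zero \<phi>"
proof
  assume "hyponormal_H2 (Vop \<phi>)"
  then show "Linf_zero \<phi>" using uniqueness[OF assms] coeffs_zero by blast
next
  assume z: "Linf_zero \<phi>"
  have V0: "Vop \<phi> c = (\<lambda>n. 0)" for c
    by (simp add: Vop_def Wop_def Pop_def Mop_def zero_coeffs_from_ae[OF z])
  have H0: "(\<lambda>n. 0::complex) \<in> H2" unfolding H2_def by simp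
  show "hyponormal_H2 (Vop \<phi>)"
    unfolding hyponormal_H2_def is_adjoint_H2_def
    by (rule exI[where x="\<lambda>g n. 0"]) (simp add: V0 H0 H2_inner_def)
qed

end
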